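(* Let $G=(V,A)$ be a directed graph and $R,T\subseteq V$ with $R\cap T=\emptyset$. Let $\mathcal{Y}(G)=(\hat V,\hat A)$ be the forking of $G$, and let $\hat R=\{(r,0)\mid r\in R\}$ and $\hat T=\{(t,0)\mid t\in T\}$. Then there is a solution $S\subseteq V\setminus(R\cup T)$ of size at most $k$ for $(G,R,T)$ if and only if there is a solution $\hat S\subseteq \hat V$ of size at most $2k+|R\cup T|$ for $(\mathcal{Y}(G),\hat R,\hat T)$.
   Context: For a directed graph $G=(V,A)$, its forking is the directed graph $\mathcal{Y}(G)=(\hat V,\hat A)$ with $\hat V=V\times\{0,1\}$ and $\hat A=\{((u,0),(v,1))\mid (u,v)\in A\}\cup\{((v,1),(v,0))\mid v\in V\}$. For a directed graph $H$ with vertex set $W$ and subsets $R,T\subseteq W$, a solution for $(H,R,T)$ is a set $S\subseteq W$ such that the induced subgraph $H[R\cup S\cup T]$ contains a directed path from $r$ to $t$ for every $r\in R$ and every $t\in R\cup T$. *)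

theory Defs
  imports Main
begin

text \<open>Directed paths in the induced subgraph H[X] are captured by the reflexive-transitive
  closure of the arcs with both ends in X.\<close>

definition induced_arcs :: "('a \<times> 'a) set \<Rightarrow> 'a set \<Rightarrow> ('a \<times> 'a) set" where
  "induced_arcs A X = A \<inter> (X \<times> X)"

definition is_solution :: "'a set \<Rightarrow> ('a \<times> 'a) set \<Rightarrow> 'a set \<Rightarrow> 'a set \<Rightarrow> 'a set \<Rightarrow> bool" where
  "is_solution W A R T S \<longleftrightarrow> S \<subseteq> W \<and>
     (\<forall>r\<in>R. \<forall>t\<in>R \<union> T. (r, t) \<in> (induced_arcs A (R \<union> S \<union> T))\<^sup>*)"

definition fork_V :: "'a set \<Rightarrow> ('a \<times> nat) set" where
  "fork_V V = V \<times> {0, 1}"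

definition fork_A :: "'a set \<Rightarrow> ('a \<times> 'a) set \<Rightarrow> (('a \<times> nat) \<times> ('a \<times> nat)) set" where
  "fork_A V A = {((u, 0), (v, 1)) | u v. (u, v) \<in> A} \<union> {((v, 1), (v, 0)) | v. v \<in> V}"

end

theory Submission
  imports Defs
begin

lemma fwd_path:
  assumes "(x, y) \<in> (induced_arcs A X)\<^sup>*"
    and "\<And>v. v \<in> X \<Longrightarrow> (v, 0::nat) \<in> X' \<and> (v, 1) \<in> X'"
    and "A \<subseteq> V \<times> V"
  shows "((x, 0), (y, 0)) \<in> (induced_arcs (fork_A V A) X')\<^sup>*"
  using assms(1)
proof (induction rule: rtrancl_induct)
  case base then show ?case by simp
next
  case (step y z)
  then have yz: "(y, z) \<in> A" "y \<in> X" "z \<in> X" by (auto simp: induced_arcs_def)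
  then have "z \<in> V" using assms(3) by auto
  have "((y,0),(z,1)) \<in> induced_arcs (fork_A V A) X'"
    using yz assms(2) by (auto simp: induced_arcs_def fork_A_def)
  moreover have "((z,1),(z,0)) \<in> induced_arcs (fork_A V A) X'"
    using yz assms(2) \<open>z \<in> V\<close> by (auto simp: induced_arcs_def fork_A_def)
  ultimately show ?case using step.IH
    by (meson rtrancl.rtrancl_into_rtrancl)
qed

lemma bwd_path:
  assumes "((r, 0::nat), y) \<in> (induced_arcs (fork_A V A) X')\<^sup>*"
    and "r \<in> X"
    and "\<And>v. (v, 0::nat) \<in> X' \<Longrightarrow> (v, 1) \<in> X' \<Longrightarrow> v \<in> X"
  shows "(snd y = 0 \<longrightarrow> (r, fst y) \<in> (induced_arcs A X)\<^sup>* \<and> fst y \<in> X) \<and>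
         (snd y = 1 \<longrightarrow> (\<exists>u. (r, u) \<in> (induced_arcs A X)\<^sup>* \<and> u \<in> X \<and> (u, fst y) \<in> A))"
  using assms(1)
proof (induction rule: rtrancl_induct)
  case base then show ?case using assms(2) by simp
next
  case (step y z)
  from step(2) have e: "(y, z) \<in> fork_A V A" "y \<in> X'" "z \<in> X'"
    by (auto simp: induced_arcs_def)
  from e(1) consider (a) u v where "y = (u,0)" "z = (v,1)" "(u,v) \<in> A"
    | (b) v where "y = (v,1)" "z = (v,0)" "v \<in> V"
    unfolding fork_A_def by blast
  then show ?case
  proof cases
    case a
    have "(r, u) \<in> (induced_arcs A X)\<^sup>* \<and> u \<in> X" using step.IH a(1) by simp
    then show ?thesis using a(2,3) by auto
  next
    case b
    have "(v,0) \<in> X'" "(v,1) \<in> X'" using e(2,3) b by simp_all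
    then have "v \<in> X" by (rule assms(3))
    have "\<exists>u. (r, u) \<in> (induced_arcs A X)\<^sup>* \<and> u \<in> X \<and> (u, v) \<in> A"
      using step.IH b(1) by simp
    then obtain u where "(r, u) \<in> (induced_arcs A X)\<^sup>*" "u \<in> X" "(u, v) \<in> A"
      by blast
    moreover have "(u, v) \<in> induced_arcs A X" using \<open>v \<in> X\<close> \<open>u \<in> X\<close> \<open>(u, v) \<in> A\<close>
      by (simp add: induced_arcs_def)
    ultimately have "(r, v) \<in> (induced_arcs A X)\<^sup>*"
      by (meson rtrancl.rtrancl_into_rtrancl)
    then show ?thesis using b \<open>v \<in> X\<close> by simp
  qed
qed

lemma last_arc:
  assumes "((r, 0::nat), (x, 0)) \<in> (induced_arcs (fork_A V A) X')\<^sup>*" and "r \<noteq> x"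
  shows "(x, 1) \<in> X'"
  using assms(1)
proof (cases rule: rtranclE)
  case base then show ?thesis using assms(2) by simp
next
  case (step y)
  then have "(y, (x,0)) \<in> fork_A V A" "y \<in> X'" by (auto simp: induced_arcs_def)
  then show ?thesis unfolding fork_A_def by auto
qed

theorem lemma5:
  fixes V :: "'a set" and A :: "('a \<times> 'a) set" and R T :: "'a set" and k :: nat
  assumes "finite V" and "A \<subseteq> V \<times> V" and "R \<subseteq> V" and "T \<subseteq> V" and "R \<inter> T = {}"
  shows "(\<exists>S. S \<subseteq> V - (R \<union> T) \<and> card S \<le> k \<and> is_solution V A R T S) \<longleftrightarrow>
         (\<exists>S'. card S' \<le> 2 * k + card (R \<union> T) \<and>
               is_solution (fork_V V) (fork_A V A) ((\<lambda>r. (r, 0)) ` R) ((\<lambda>t. (t, 0)) ` T) S')"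
proof
  assume "\<exists>S. S \<subseteq> V - (R \<union> T) \<and> card S \<le> k \<and> is_solution V A R T S"
  then obtain S where S: "S \<subseteq> V - (R \<union> T)" "card S \<le> k" "is_solution V A R T S" by blast
  define S' where "S' = S \<times> {0::nat,1} \<union> (R \<union> T) \<times> {1}"
  have "S \<subseteq> V" "R \<union> T \<subseteq> V" using S(1) assms(3,4) by auto
  then have fS: "finite S" "finite (R \<union> T)" using assms(1) by (meson finite_subset)+
  have "card S' \<le> card (S \<times> {0::nat,1}) + card ((R \<union> T) \<times> {1::nat})"
    unfolding S'_def by (rule card_Un_le)
  also have "\<dots> = 2 * card S + card (R \<union> T)" using fS by (simp add: card_cartesian_product)
  finally have c: "card S' \<le> 2 * k + card (R \<union> T)" using S(2) by linarith
  let ?X' = "(\<lambda>r. (r, 0::nat)) ` R \<union> S' \<union> (\<lambda>t. (t, 0)) ` T"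
  have sol: "is_solution (fork_V V) (fork_A V A) ((\<lambda>r. (r, 0)) ` R) ((\<lambda>t. (t, 0)) ` T) S'"
    unfolding is_solution_def
  proof (intro conjI ballI)
    show "S' \<subseteq> fork_V V" using S(1) assms(3,4) by (auto simp: S'_def fork_V_def)
  next
    fix r' t' assume r': "r' \<in> (\<lambda>r. (r, 0::nat)) ` R"
      and t': "t' \<in> (\<lambda>r. (r, 0::nat)) ` R \<union> (\<lambda>t. (t, 0)) ` T"
    then obtain r t where rt: "r' = (r,0)" "t' = (t,0)" "r \<in> R" "t \<in> R \<union> T" by auto
    then have "(r, t) \<in> (induced_arcs A (R \<union> S \<union> T))\<^sup>*" using S(3) by (auto simp: is_solution_def)
    then show "(r', t') \<in> (induced_arcs (fork_A V A) ?X')\<^sup>*"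
      unfolding rt by (rule fwd_path[OF _ _ assms(2)]) (auto simp: S'_def)
  qed
  show "\<exists>S'. card S' \<le> 2 * k + card (R \<union> T) \<and>
        is_solution (fork_V V) (fork_A V A) ((\<lambda>r. (r, 0)) ` R) ((\<lambda>t. (t, 0)) ` T) S'"
    using c sol by blast
next
  assume "\<exists>S'. card S' \<le> 2 * k + card (R \<union> T) \<and>
        is_solution (fork_V V) (fork_A V A) ((\<lambda>r. (r, 0)) ` R) ((\<lambda>t. (t, 0)) ` T) S'"
  then obtain S' where S': "card S' \<le> 2 * k + card (R \<union> T)"
    "is_solution (fork_V V) (fork_A V A) ((\<lambda>r. (r, 0::nat)) ` R) ((\<lambda>t. (t, 0)) ` T) S'" by blast
  let ?X' = "(\<lambda>r. (r, 0::nat)) ` R \<union> S' \<union> (\<lambda>t. (t, 0)) ` T"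
  have S'V: "S' \<subseteq> fork_V V" using S'(2) by (simp add: is_solution_def)
  have "finite (fork_V V)" using assms(1) by (simp add: fork_V_def)
  then have finS': "finite S'" using S'V by (rule rev_finite_subset)
  have paths: "\<And>r t. r \<in> R \<Longrightarrow> t \<in> R \<union> T \<Longrightarrow> ((r,0),(t,0)) \<in> (induced_arcs (fork_A V A) ?X')\<^sup>*"
    using S'(2) unfolding is_solution_def by blast
  define S where "S = {v \<in> V - (R \<union> T). (v,0) \<in> S' \<and> (v,1) \<in> S'}"
  show "\<exists>S. S \<subseteq> V - (R \<union> T) \<and> card S \<le> k \<and> is_solution V A R T S"
  proof (cases "R = {}")
    case True
    then show ?thesis by (intro exI[of _ "{}"]) (simp add: is_solution_def)
  next
    case False
    then obtain r0 where r0: "r0 \<in> R" by blast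
    define Y where "Y = ((R \<union> T) - {r0}) \<times> {1::nat}"
    have fS: "finite S" using assms(1) by (simp add: S_def)
    have "R \<union> T \<subseteq> V" using assms(3,4) by auto
    then have fRT: "finite (R \<union> T)" using assms(1) by (meson finite_subset)
    have Ysub: "Y \<subseteq> S'"
    proof
      fix y assume "y \<in> Y"
      then obtain x where x: "y = (x,1)" "x \<in> R \<union> T" "x \<noteq> r0" by (auto simp: Y_def)
      have "(x,1) \<in> ?X'" by (rule last_arc[OF paths[OF r0 x(2)]]) (use x in auto)
      then show "y \<in> S'" using x by auto
    qed
    have "S \<times> {0::nat,1} \<subseteq> S'" by (auto simp: S_def)
    moreover have "S \<times> {0::nat,1} \<inter> Y = {}" by (auto simp: S_def Y_def)
    ultimately have c1: "card (S \<times> {0::nat,1} \<union> Y) \<le> card S'"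
      using Ysub finS' by (intro card_mono) auto
    have fY: "finite Y" using fRT by (simp add: Y_def)
    have "card (S \<times> {0::nat,1} \<union> Y) = card (S \<times> {0::nat,1}) + card Y"
      using fS fY \<open>S \<times> {0::nat,1} \<inter> Y = {}\<close> by (intro card_Un_disjoint) auto
    note c1 this
    then have "card (S \<times> {0::nat,1}) + card Y \<le> card S'" by simp
    moreover have "card (S \<times> {0::nat,1}) = 2 * card S" using fS by (simp add: card_cartesian_product)
    moreover have "card Y = card (R \<union> T) - 1" using fRT r0 by (simp add: Y_def card_cartesian_product)
    moreover have "card (R \<union> T) \<ge> 1" using fRT r0 card_0_eq[OF fRT] by (cases "card (R \<union> T)") auto
    ultimately have "card S \<le> k" using S'(1) by linarith
    moreover have "is_solution V A R T S"
      unfolding is_solution_def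
    proof (intro conjI ballI)
      show "S \<subseteq> V" by (auto simp: S_def)
    next
      fix r t assume r: "r \<in> R" and t: "t \<in> R \<union> T"
      have prem: "v \<in> R \<union> S \<union> T" if "(v, 0::nat) \<in> ?X'" "(v, 1) \<in> ?X'" for v
      proof (cases "v \<in> R \<union> T")
        case True then show ?thesis by blast
      next
        case False
        with that have "(v,0) \<in> S'" "(v,1) \<in> S'" by auto
        moreover then have "v \<in> V" using S'V by (auto simp: fork_V_def)
        ultimately show ?thesis using False by (simp add: S_def)
      qed
      have rX: "r \<in> R \<union> S \<union> T" using r by blast
      have "snd (t, 0::nat) = 0 \<longrightarrow> (r, fst (t, 0::nat)) \<in> (induced_arcs A (R \<union> S \<union> T))\<^sup>* \<and> fst (t,0::nat) \<in> R \<union> S \<union> T"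
        using bwd_path[OF paths[OF r t] rX prem] by blast
      then show "(r, t) \<in> (induced_arcs A (R \<union> S \<union> T))\<^sup>*" by simp
    qed
    moreover have "S \<subseteq> V - (R \<union> T)" by (auto simp: S_def)
    ultimately show ?thesis by blast
  qed
qed

end
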